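(* Let $G$ be an infinite discrete group, $B$ a unital C$^*$-algebra with action $\alpha:G\to\mathrm{Aut}(B)$, $A_1=B\rtimes_{\alpha,r}G$ with implementing unitaries $u_g$ ($g\in G$), $\phi_1$ a faithful $\alpha$-invariant state on $B$ extended to $A_1$ by vanishing on $Bu_g$ for $g\ne e$, $A_2$ a unital C$^*$-algebra with faithful state $\phi_2$, and $(A,\phi)=(A_1,\phi_1)*(A_2,\phi_2)$ the reduced free product. Then the family of subalgebras $\bigl(B,\,(u_g^*A_2u_g)_{g\in G}\bigr)$ of $A$ is free with respect to $\phi$.
   Context: Reduced free product: given unital C$^*$-algebras $A_\iota$ with states $\phi_\iota$ whose GNS representations are faithful, $(A,\phi)=*_{\iota}(A_\iota,\phi_\iota)$ is the unital C$^*$-algebra $A$ containing copies of the $A_\iota$, generated by their union, with a state $\phi$ whose GNS representation is faithful on $A$, restricting to $\phi_\iota$ on each $A_\iota$, such that $(A_\iota)_\iota$ is free with respect to $\phi$. A family of unital subalgebras $(S_\iota)_{\iota\in I}$ is free with respect to $\phi$ if $\phi(a_1\cdots a_n)=0$ whenever $n\ge1$, $a_j\in S_{\iota_j}\cap\ker\phi$ and consecutive indices $\iota_j\neq\iota_{j+1}$. Here the subalgebras in the family are indexed by $\{B\}\sqcup G$, so $u_g^*A_2u_g$ and $u_h^*A_2u_h$ for $g\ne h$ count as different members. *)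

theory Defs
  imports Complex_Main "HOL-Algebra.Group"
begin

record 'a cstar_alg =
  cs_carrier :: "'a set"
  cs_add :: "'a \<Rightarrow> 'a \<Rightarrow> 'a"
  cs_mul :: "'a \<Rightarrow> 'a \<Rightarrow> 'a"
  cs_smul :: "complex \<Rightarrow> 'a \<Rightarrow> 'a"
  cs_zero :: 'a
  cs_one :: 'a
  cs_star :: "'a \<Rightarrow> 'a"
  cs_norm :: "'a \<Rightarrow> real"

definition cs_diff :: "'a cstar_alg \<Rightarrow> 'a \<Rightarrow> 'a \<Rightarrow> 'a" where
  "cs_diff A x y = cs_add A x (cs_smul A (-1) y)"

definition unital_cstar_algebra :: "'a cstar_alg \<Rightarrow> bool" where
  "unital_cstar_algebra A \<longleftrightarrow>
     (let C = cs_carrier A; p = cs_add A; m = cs_mul A; s = cs_smul A;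
          z = cs_zero A; e = cs_one A; st = cs_star A; n = cs_norm A in
     z \<in> C \<and> e \<in> C \<and>
     (\<forall>x\<in>C. \<forall>y\<in>C. p x y \<in> C \<and> m x y \<in> C) \<and>
     (\<forall>c. \<forall>x\<in>C. s c x \<in> C) \<and> (\<forall>x\<in>C. st x \<in> C) \<and>
     (\<forall>x\<in>C. \<forall>y\<in>C. \<forall>w\<in>C. p (p x y) w = p x (p y w) \<and> m (m x y) w = m x (m y w) \<and>
        m (p x y) w = p (m x w) (m y w) \<and> m w (p x y) = p (m w x) (m w y)) \<and>
     (\<forall>x\<in>C. \<forall>y\<in>C. p x y = p y x) \<and>
     (\<forall>x\<in>C. p z x = x \<and> p x (s (-1) x) = z \<and> m e x = x \<and> m x e = x \<and> s 1 x = x) \<and>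
     (\<forall>a b. \<forall>x\<in>C. s (a * b) x = s a (s b x) \<and> s (a + b) x = p (s a x) (s b x)) \<and>
     (\<forall>a. \<forall>x\<in>C. \<forall>y\<in>C. s a (p x y) = p (s a x) (s a y) \<and>
        m (s a x) y = s a (m x y) \<and> m x (s a y) = s a (m x y)) \<and>
     (\<forall>x\<in>C. st (st x) = x) \<and>
     (\<forall>x\<in>C. \<forall>y\<in>C. st (p x y) = p (st x) (st y) \<and> st (m x y) = m (st y) (st x)) \<and>
     (\<forall>a. \<forall>x\<in>C. st (s a x) = s (cnj a) (st x)) \<and>
     (\<forall>x\<in>C. 0 \<le> n x \<and> (n x = 0 \<longleftrightarrow> x = z)) \<and>
     (\<forall>x\<in>C. \<forall>y\<in>C. n (p x y) \<le> n x + n y \<and> n (m x y) \<le> n x * n y) \<and>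
     (\<forall>a. \<forall>x\<in>C. n (s a x) = cmod a * n x) \<and>
     (\<forall>x\<in>C. n (m (st x) x) = (n x)\<^sup>2) \<and>
     \<comment> \<open>completeness\<close>
     (\<forall>X. (\<forall>k. X k \<in> C) \<and>
          (\<forall>\<epsilon>>0. \<exists>N. \<forall>i\<ge>N. \<forall>j\<ge>N. n (cs_diff A (X i) (X j)) < \<epsilon>) \<longrightarrow>
          (\<exists>x\<in>C. (\<lambda>k. n (cs_diff A (X k) x)) \<longlonglongrightarrow> 0)))"

definition cs_norm_closed :: "'a cstar_alg \<Rightarrow> 'a set \<Rightarrow> bool" where
  "cs_norm_closed A S \<longleftrightarrow>
     (\<forall>X x. (\<forall>k. X k \<in> S) \<and> x \<in> cs_carrier A \<and>
        (\<lambda>k. cs_norm A (cs_diff A (X k) x)) \<longlonglongrightarrow> 0 \<longrightarrow> x \<in> S)"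

definition unital_cstar_subalgebra :: "'a cstar_alg \<Rightarrow> 'a set \<Rightarrow> bool" where
  "unital_cstar_subalgebra A S \<longleftrightarrow>
     S \<subseteq> cs_carrier A \<and> cs_one A \<in> S \<and>
     (\<forall>x\<in>S. \<forall>y\<in>S. cs_add A x y \<in> S \<and> cs_mul A x y \<in> S) \<and>
     (\<forall>c. \<forall>x\<in>S. cs_smul A c x \<in> S) \<and> (\<forall>x\<in>S. cs_star A x \<in> S) \<and>
     cs_norm_closed A S"

definition cstar_generated :: "'a cstar_alg \<Rightarrow> 'a set \<Rightarrow> 'a set" where
  "cstar_generated A T = \<Inter>{S. unital_cstar_subalgebra A S \<and> T \<subseteq> S}"

definition is_state :: "'a cstar_alg \<Rightarrow> ('a \<Rightarrow> complex) \<Rightarrow> bool" where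
  "is_state A \<phi> \<longleftrightarrow>
     (\<forall>x\<in>cs_carrier A. \<forall>y\<in>cs_carrier A. \<phi> (cs_add A x y) = \<phi> x + \<phi> y) \<and>
     (\<forall>c. \<forall>x\<in>cs_carrier A. \<phi> (cs_smul A c x) = c * \<phi> x) \<and>
     (\<forall>x\<in>cs_carrier A. Im (\<phi> (cs_mul A (cs_star A x) x)) = 0 \<and>
                          0 \<le> Re (\<phi> (cs_mul A (cs_star A x) x))) \<and>
     \<phi> (cs_one A) = 1"

definition faithful_on :: "'a cstar_alg \<Rightarrow> ('a \<Rightarrow> complex) \<Rightarrow> 'a set \<Rightarrow> bool" where
  "faithful_on A \<phi> S \<longleftrightarrow>
     (\<forall>a\<in>S. \<phi> (cs_mul A (cs_star A a) a) = 0 \<longrightarrow> a = cs_zero A)"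

text \<open>The GNS representation of the restriction of the state to S is faithful on S:
  pi(a) = 0 iff the vector [a x] has norm zero for all x in S, i.e. phi(x* a* a x) = 0.\<close>
definition gns_faithful_on :: "'a cstar_alg \<Rightarrow> ('a \<Rightarrow> complex) \<Rightarrow> 'a set \<Rightarrow> bool" where
  "gns_faithful_on A \<phi> S \<longleftrightarrow>
     (\<forall>a\<in>S. (\<forall>x\<in>S. \<phi> (cs_mul A (cs_star A (cs_mul A a x)) (cs_mul A a x)) = 0)
        \<longrightarrow> a = cs_zero A)"

definition cs_unitary :: "'a cstar_alg \<Rightarrow> 'a \<Rightarrow> bool" where
  "cs_unitary A u \<longleftrightarrow> u \<in> cs_carrier A \<and>
     cs_mul A (cs_star A u) u = cs_one A \<and> cs_mul A u (cs_star A u) = cs_one A"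

definition star_aut_on :: "'a cstar_alg \<Rightarrow> 'a set \<Rightarrow> ('a \<Rightarrow> 'a) \<Rightarrow> bool" where
  "star_aut_on A B f \<longleftrightarrow> bij_betw f B B \<and> f (cs_one A) = cs_one A \<and>
     (\<forall>x\<in>B. \<forall>y\<in>B. f (cs_add A x y) = cs_add A (f x) (f y) \<and>
                   f (cs_mul A x y) = cs_mul A (f x) (f y)) \<and>
     (\<forall>c. \<forall>x\<in>B. f (cs_smul A c x) = cs_smul A c (f x)) \<and>
     (\<forall>x\<in>B. f (cs_star A x) = cs_star A (f x))"

definition cs_prod :: "'a cstar_alg \<Rightarrow> 'a list \<Rightarrow> 'a" where
  "cs_prod A as = foldr (cs_mul A) as (cs_one A)"

definition free_family :: "'a cstar_alg \<Rightarrow> ('a \<Rightarrow> complex) \<Rightarrow> 'i set \<Rightarrow> ('i \<Rightarrow> 'a set) \<Rightarrow> bool" where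
  "free_family A \<phi> I S \<longleftrightarrow>
     (\<forall>is as. length as = length is \<and> 1 \<le> length as \<and> set is \<subseteq> I \<and>
        (\<forall>j<length as. as ! j \<in> S (is ! j) \<and> \<phi> (as ! j) = 0) \<and>
        (\<forall>j. Suc j < length is \<longrightarrow> is ! j \<noteq> is ! Suc j)
        \<longrightarrow> \<phi> (cs_prod A as) = 0)"

text \<open>Reduced free product (A, phi) = (A1, phi|A1) * (A2, phi|A2), with A1, A2 identified
  with their copies inside A, as characterised in the paper.\<close>
definition reduced_free_product ::
  "'a cstar_alg \<Rightarrow> ('a \<Rightarrow> complex) \<Rightarrow> 'a set \<Rightarrow> 'a set \<Rightarrow> bool" where
  "reduced_free_product A \<phi> A1 A2 \<longleftrightarrow>
     unital_cstar_algebra A \<and> is_state A \<phi> \<and>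
     unital_cstar_subalgebra A A1 \<and> unital_cstar_subalgebra A A2 \<and>
     gns_faithful_on A \<phi> A1 \<and> gns_faithful_on A \<phi> A2 \<and>
     cstar_generated A (A1 \<union> A2) = cs_carrier A \<and>
     gns_faithful_on A \<phi> (cs_carrier A) \<and>
     free_family A \<phi> {1::nat, 2} (\<lambda>i. if i = 1 then A1 else A2)"

end

theory Submission
  imports Defs
begin

lemma alt_Cons_gen:
  "(\<forall>j. Suc j < length (y#L) \<longrightarrow> f ((y#L)!j) \<noteq> f ((y#L)!Suc j)) \<longleftrightarrow>
   (\<forall>j. Suc j < length L \<longrightarrow> f (L!j) \<noteq> f (L!Suc j)) \<and> (L \<noteq> [] \<longrightarrow> f (hd L) \<noteq> f y)"
proof (cases L)
  case Nil then show ?thesis by simp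
next
  case (Cons z L')
  show ?thesis
  proof
    assume H: "\<forall>j. Suc j < length (y#L) \<longrightarrow> f ((y#L)!j) \<noteq> f ((y#L)!Suc j)"
    have "f (hd L) \<noteq> f y" using H[rule_format, of 0] Cons by auto
    moreover have "\<forall>j. Suc j < length L \<longrightarrow> f (L!j) \<noteq> f (L!Suc j)"
      using H Cons by (metis length_Cons nth_Cons_Suc Suc_less_eq)
    ultimately show "(\<forall>j. Suc j < length L \<longrightarrow> f (L!j) \<noteq> f (L!Suc j)) \<and> (L \<noteq> [] \<longrightarrow> f (hd L) \<noteq> f y)" by simp
  next
    assume H: "(\<forall>j. Suc j < length L \<longrightarrow> f (L!j) \<noteq> f (L!Suc j)) \<and> (L \<noteq> [] \<longrightarrow> f (hd L) \<noteq> f y)"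
    show "\<forall>j. Suc j < length (y#L) \<longrightarrow> f ((y#L)!j) \<noteq> f ((y#L)!Suc j)"
    proof (intro allI impI)
      fix j assume j: "Suc j < length (y#L)"
      show "f ((y#L)!j) \<noteq> f ((y#L)!Suc j)"
      proof (cases j)
        case 0 then show ?thesis using H Cons by auto
      next
        case (Suc k) then show ?thesis using H j by auto
      qed
    qed
  qed
qed

locale fp_setting =
  fixes G :: "'g monoid" and A :: "'a cstar_alg" and \<phi> :: "'a \<Rightarrow> complex"
    and B A1 A2 :: "'a set" and \<alpha> :: "'g \<Rightarrow> 'a \<Rightarrow> 'a" and u :: "'g \<Rightarrow> 'a"
  assumes grp: "group G"
    and uca: "unital_cstar_algebra A"
    and st: "is_state A \<phi>"
    and sA1: "unital_cstar_subalgebra A A1"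
    and sA2: "unital_cstar_subalgebra A A2"
    and sB: "unital_cstar_subalgebra A B"
    and BA1: "B \<subseteq> A1"
    and ff: "free_family A \<phi> {1::nat, 2} (\<lambda>i. if i = 1 then A1 else A2)"
    and aB: "\<And>g b. g \<in> carrier G \<Longrightarrow> b \<in> B \<Longrightarrow> \<alpha> g b \<in> B"
    and u_un: "\<And>g. g \<in> carrier G \<Longrightarrow> cs_unitary A (u g) \<and> u g \<in> A1"
    and u_one: "u \<one>\<^bsub>G\<^esub> = cs_one A"
    and u_mult: "\<And>g h. g \<in> carrier G \<Longrightarrow> h \<in> carrier G \<Longrightarrow>
           u (g \<otimes>\<^bsub>G\<^esub> h) = cs_mul A (u g) (u h)"
    and u_conj: "\<And>g b. g \<in> carrier G \<Longrightarrow> b \<in> B \<Longrightarrow>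
           cs_mul A (u g) (cs_mul A b (cs_star A (u g))) = \<alpha> g b"
    and phi_a: "\<And>g b. g \<in> carrier G \<Longrightarrow> b \<in> B \<Longrightarrow> \<phi> (\<alpha> g b) = \<phi> b"
    and phi_bu: "\<And>g b. g \<in> carrier G \<Longrightarrow> g \<noteq> \<one>\<^bsub>G\<^esub> \<Longrightarrow> b \<in> B \<Longrightarrow> \<phi> (cs_mul A b (u g)) = 0"
begin

abbreviation "CC \<equiv> cs_carrier A"
abbreviation "mm \<equiv> cs_mul A"
abbreviation "pp \<equiv> cs_add A"
abbreviation "ss \<equiv> cs_smul A"
abbreviation "stt \<equiv> cs_star A"
abbreviation "e1 \<equiv> cs_one A"

lemma one_C: "e1 \<in> CC" using uca unfolding unital_cstar_algebra_def Let_def by (elim conjE) auto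
lemma mul_C: "x \<in> CC \<Longrightarrow> y \<in> CC \<Longrightarrow> mm x y \<in> CC" using uca unfolding unital_cstar_algebra_def Let_def by (elim conjE) auto
lemma add_C: "x \<in> CC \<Longrightarrow> y \<in> CC \<Longrightarrow> pp x y \<in> CC" using uca unfolding unital_cstar_algebra_def Let_def by (elim conjE) auto
lemma smul_C: "x \<in> CC \<Longrightarrow> ss c x \<in> CC" using uca unfolding unital_cstar_algebra_def Let_def by (elim conjE) auto
lemma star_C: "x \<in> CC \<Longrightarrow> stt x \<in> CC" using uca unfolding unital_cstar_algebra_def Let_def by (elim conjE) auto
lemma assoc: "x \<in> CC \<Longrightarrow> y \<in> CC \<Longrightarrow> w \<in> CC \<Longrightarrow> mm (mm x y) w = mm x (mm y w)"
  using uca unfolding unital_cstar_algebra_def Let_def by (elim conjE) auto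
lemma one_l: "x \<in> CC \<Longrightarrow> mm e1 x = x" using uca unfolding unital_cstar_algebra_def Let_def by (elim conjE) auto
lemma one_r: "x \<in> CC \<Longrightarrow> mm x e1 = x" using uca unfolding unital_cstar_algebra_def Let_def by (elim conjE) auto
lemma distl: "x \<in> CC \<Longrightarrow> y \<in> CC \<Longrightarrow> w \<in> CC \<Longrightarrow> mm w (pp x y) = pp (mm w x) (mm w y)"
  using uca unfolding unital_cstar_algebra_def Let_def by (elim conjE) auto
lemma distr: "x \<in> CC \<Longrightarrow> y \<in> CC \<Longrightarrow> w \<in> CC \<Longrightarrow> mm (pp x y) w = pp (mm x w) (mm y w)"
  using uca unfolding unital_cstar_algebra_def Let_def by (elim conjE) auto
lemma smul_l: "x \<in> CC \<Longrightarrow> y \<in> CC \<Longrightarrow> mm (ss a x) y = ss a (mm x y)"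
  using uca unfolding unital_cstar_algebra_def Let_def by (elim conjE) auto
lemma smul_r: "x \<in> CC \<Longrightarrow> y \<in> CC \<Longrightarrow> mm x (ss a y) = ss a (mm x y)"
  using uca unfolding unital_cstar_algebra_def Let_def by (elim conjE) auto

lemma phi_add: "x \<in> CC \<Longrightarrow> y \<in> CC \<Longrightarrow> \<phi> (pp x y) = \<phi> x + \<phi> y" using st unfolding is_state_def by blast
lemma phi_smul: "x \<in> CC \<Longrightarrow> \<phi> (ss c x) = c * \<phi> x" using st unfolding is_state_def by blast
lemma phi_one: "\<phi> e1 = 1" using st unfolding is_state_def by blast

lemma A1_C: "A1 \<subseteq> CC" using sA1 unfolding unital_cstar_subalgebra_def by blast
lemma A2_C: "A2 \<subseteq> CC" using sA2 unfolding unital_cstar_subalgebra_def by blast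
lemma B_C: "B \<subseteq> CC" using sB BA1 A1_C by blast
lemma one_B: "e1 \<in> B" using sB unfolding unital_cstar_subalgebra_def by blast
lemma one_A2: "e1 \<in> A2" using sA2 unfolding unital_cstar_subalgebra_def by blast
lemma A1_mul: "x \<in> A1 \<Longrightarrow> y \<in> A1 \<Longrightarrow> mm x y \<in> A1" using sA1 unfolding unital_cstar_subalgebra_def by blast
lemma A1_star: "x \<in> A1 \<Longrightarrow> stt x \<in> A1" using sA1 unfolding unital_cstar_subalgebra_def by blast
lemma A2_add: "x \<in> A2 \<Longrightarrow> y \<in> A2 \<Longrightarrow> pp x y \<in> A2" using sA2 unfolding unital_cstar_subalgebra_def by blast
lemma A2_smul: "x \<in> A2 \<Longrightarrow> ss c x \<in> A2" using sA2 unfolding unital_cstar_subalgebra_def by blast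

lemma oneG: "\<one>\<^bsub>G\<^esub> \<in> carrier G" using grp by (simp add: group.is_monoid monoid.one_closed)
lemma invG: "g \<in> carrier G \<Longrightarrow> inv\<^bsub>G\<^esub> g \<in> carrier G" using grp by (simp add: group.inv_closed)
lemma rinvG: "g \<in> carrier G \<Longrightarrow> g \<otimes>\<^bsub>G\<^esub> inv\<^bsub>G\<^esub> g = \<one>\<^bsub>G\<^esub>" using grp by (simp add: group.r_inv)
lemma mulG: "g \<in> carrier G \<Longrightarrow> h \<in> carrier G \<Longrightarrow> g \<otimes>\<^bsub>G\<^esub> h \<in> carrier G" using grp by (simp add: group.is_monoid monoid.m_closed)

lemma uA1: "g \<in> carrier G \<Longrightarrow> u g \<in> A1" using u_un by blast
lemma uC: "g \<in> carrier G \<Longrightarrow> u g \<in> CC" using uA1 A1_C by blast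
lemma u_sl: "g \<in> carrier G \<Longrightarrow> mm (stt (u g)) (u g) = e1" using u_un unfolding cs_unitary_def by blast

lemma star_one: "stt e1 = e1"
proof -
  have "mm (stt e1) e1 = e1" using u_sl[OF oneG] u_one by simp
  then show ?thesis using one_r[OF star_C[OF one_C]] by simp
qed

lemma us_eq: assumes g: "g \<in> carrier G" shows "stt (u g) = u (inv\<^bsub>G\<^esub> g)"
proof -
  have ig: "inv\<^bsub>G\<^esub> g \<in> carrier G" using g invG by simp
  have "mm (u g) (u (inv\<^bsub>G\<^esub> g)) = e1" using u_mult[OF g ig] g rinvG u_one by simp
  then have "stt (u g) = mm (stt (u g)) (mm (u g) (u (inv\<^bsub>G\<^esub> g)))"
    using one_r star_C uC g by simp
  also have "\<dots> = u (inv\<^bsub>G\<^esub> g)" using assoc[symmetric] star_C uC g ig u_sl one_l by simp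
  finally show ?thesis .
qed

lemma u_star: "g \<in> carrier G \<Longrightarrow> h \<in> carrier G \<Longrightarrow> mm (u h) (stt (u g)) = u (h \<otimes>\<^bsub>G\<^esub> inv\<^bsub>G\<^esub> g)"
  using us_eq u_mult invG by simp

lemma u_b: assumes h: "h \<in> carrier G" and b: "b \<in> B" shows "mm (u h) b = mm (\<alpha> h b) (u h)"
proof -
  have bC: "b \<in> CC" using b B_C by blast
  have "mm (\<alpha> h b) (u h) = mm (mm (u h) (mm b (stt (u h)))) (u h)" using u_conj h b by simp
  also have "\<dots> = mm (u h) b" using assoc uC star_C mul_C bC h u_sl one_r by simp
  finally show ?thesis by simp
qed

lemma phi_u: "k \<in> carrier G \<Longrightarrow> k \<noteq> \<one>\<^bsub>G\<^esub> \<Longrightarrow> \<phi> (u k) = 0"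
  using phi_bu[OF _ _ one_B] one_l uC by simp

definition altw :: "(nat \<times> 'a) list \<Rightarrow> bool" where
  "altw L \<longleftrightarrow> (\<forall>p\<in>set L. fst p \<in> {1,2} \<and> snd p \<in> (if fst p = 1 then A1 else A2) \<and> \<phi> (snd p) = 0)
     \<and> (\<forall>j. Suc j < length L \<longrightarrow> fst (L!j) \<noteq> fst (L!Suc j))"

lemma altw_Nil: "altw []" unfolding altw_def by simp

lemma altw_Cons: "altw ((t,x)#L) \<longleftrightarrow> t \<in> {1,2} \<and> x \<in> (if t = 1 then A1 else A2) \<and> \<phi> x = 0
   \<and> altw L \<and> (L \<noteq> [] \<longrightarrow> fst (hd L) \<noteq> t)"
  unfolding altw_def using alt_Cons_gen[where f=fst and y="(t,x)" and L=L] by auto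

lemma alt_zero: assumes "L \<noteq> []" "altw L" shows "\<phi> (cs_prod A (map snd L)) = 0"
proof -
  have "\<forall>j<length (map snd L). map snd L ! j \<in> (if map fst L ! j = 1 then A1 else A2) \<and> \<phi> (map snd L ! j) = 0"
    using assms(2) unfolding altw_def by (simp add: nth_mem)
  moreover have "set (map fst L) \<subseteq> {1,2}" using assms(2) unfolding altw_def by auto
  moreover have "\<forall>j. Suc j < length (map fst L) \<longrightarrow> map fst L ! j \<noteq> map fst L ! Suc j"
    using assms(2) unfolding altw_def by simp
  moreover have "1 \<le> length (map snd L)" using assms(1) by (cases L) auto
  ultimately show ?thesis using ff unfolding free_family_def
    by (metis length_map)
qed

lemma prod_C: "set xs \<subseteq> CC \<Longrightarrow> cs_prod A xs \<in> CC"
  by (induction xs) (auto simp: cs_prod_def one_C mul_C)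

lemma altw_C: "altw L \<Longrightarrow> set (map snd L) \<subseteq> CC"
  unfolding altw_def using A1_C A2_C by (auto split: if_splits)

lemma phi_conj: assumes g: "g \<in> carrier G" and a: "a \<in> A2"
  shows "\<phi> (mm (stt (u g)) (mm a (u g))) = \<phi> a"
proof (cases "g = \<one>\<^bsub>G\<^esub>")
  case True then show ?thesis using u_one star_one one_l one_r a A2_C by auto
next
  case False
  define c where "c = - \<phi> a"
  define a0 where "a0 = pp a (ss c e1)"
  have aC: "a \<in> CC" using a A2_C by blast
  have a0A: "a0 \<in> A2" unfolding a0_def using a A2_add A2_smul one_A2 by blast
  have a0C: "a0 \<in> CC" using a0A A2_C by blast
  have pa0: "\<phi> a0 = 0" unfolding a0_def c_def using phi_add phi_smul phi_one aC smul_C one_C by simp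
  have ig: "inv\<^bsub>G\<^esub> g \<in> carrier G" using invG g .
  have ign: "inv\<^bsub>G\<^esub> g \<noteq> \<one>\<^bsub>G\<^esub>" using False g grp by (simp add: group.inv_eq_1_iff)
  have "altw [(1, stt (u g)), (2, a0), (1, u g)]"
    using altw_Cons altw_Nil us_eq[OF g] uA1[OF ig] uA1[OF g] phi_u[OF ig ign] phi_u[OF g False] a0A pa0
    by simp
  then have z: "\<phi> (mm (stt (u g)) (mm a0 (u g))) = 0"
    using alt_zero[of "[(1, stt (u g)), (2, a0), (1, u g)]"] by (simp add: cs_prod_def one_r uC[OF g])
  have uC': "u g \<in> CC" "stt (u g) \<in> CC" using uC[OF g] star_C by auto
  have "mm (stt (u g)) (mm a0 (u g)) = pp (mm (stt (u g)) (mm a (u g))) (ss c e1)"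
    unfolding a0_def using uC' aC one_C smul_C mul_C distl distr smul_l smul_r one_l u_sl[OF g]
    by (simp add: distr distl smul_l smul_r mul_C smul_C one_l)
  then have "\<phi> (mm (stt (u g)) (mm a0 (u g))) = \<phi> (mm (stt (u g)) (mm a (u g))) + c"
    using phi_add phi_smul phi_one uC' aC mul_C smul_C one_C by simp
  then show ?thesis using z c_def by simp
qed

definition Sfam :: "'g option \<Rightarrow> 'a set" where
  "Sfam i = (case i of None \<Rightarrow> B | Some g \<Rightarrow> {mm (stt (u g)) (mm a (u g)) | a. a \<in> A2})"

definition validW :: "('g option \<times> 'a) list \<Rightarrow> bool" where
  "validW W \<longleftrightarrow> (\<forall>p\<in>set W. fst p \<in> insert None (Some ` carrier G) \<and> snd p \<in> Sfam (fst p) \<and> \<phi> (snd p) = 0)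
     \<and> (\<forall>j. Suc j < length W \<longrightarrow> fst (W!j) \<noteq> fst (W!Suc j))"

lemma validW_Cons: "validW ((i,x)#W) \<longleftrightarrow> i \<in> insert None (Some ` carrier G) \<and> x \<in> Sfam i \<and> \<phi> x = 0
   \<and> validW W \<and> (W \<noteq> [] \<longrightarrow> fst (hd W) \<noteq> i)"
  unfolding validW_def using alt_Cons_gen[where f=fst and y="(i,x)" and L=W] by auto

lemma elemA2: assumes "h \<in> carrier G" "x \<in> Sfam (Some h)" "\<phi> x = 0"
  obtains a where "a \<in> A2" "\<phi> a = 0" "x = mm (stt (u h)) (mm a (u h))"
  using assms phi_conj unfolding Sfam_def by auto

lemma key:
  "W \<noteq> [] \<Longrightarrow> validW W \<Longrightarrow> \<exists>c g L. g \<in> carrier G \<and> altw L \<and> (L = [] \<longrightarrow> g = \<one>\<^bsub>G\<^esub>)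
     \<and> (L \<noteq> [] \<longrightarrow> fst (hd L) = 2)
     \<and> (case fst (hd W) of None \<Rightarrow> c \<in> B \<and> \<phi> c = 0 | Some h \<Rightarrow> c = e1 \<and> h = g \<and> L \<noteq> [])
     \<and> cs_prod A (map snd W) = mm c (mm (stt (u g)) (cs_prod A (map snd L)))"
proof (induction W)
  case Nil then show ?case by simp
next
  case (Cons y W)
  obtain i x where y: "y = (i,x)" by (cases y)
  have V: "i \<in> insert None (Some ` carrier G)" "x \<in> Sfam i" "\<phi> x = 0" "validW W" "W \<noteq> [] \<longrightarrow> fst (hd W) \<noteq> i"
    using Cons.prems(2) unfolding y validW_Cons by auto
  show ?case
  proof (cases "W = []")
    case True
    show ?thesis
    proof (cases i)
      case None
      then have xB: "x \<in> B" "\<phi> x = 0" using V unfolding Sfam_def by auto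
      then have "x \<in> CC" using B_C by blast
      then show ?thesis
        using True None y xB oneG u_one star_one altw_Nil
        by (intro exI[of _ x] exI[of _ "\<one>\<^bsub>G\<^esub>"] exI[of _ "[]"])
           (simp add: cs_prod_def one_r one_C)
    next
      case (Some h)
      then have h: "h \<in> carrier G" using V by auto
      obtain a where a: "a \<in> A2" "\<phi> a = 0" "x = mm (stt (u h)) (mm a (u h))"
        using elemA2[OF h] V Some by auto
      have aC: "a \<in> CC" using a A2_C by blast
      have usC: "stt (u h) \<in> CC" using star_C uC h by blast
      define L where "L = [(2::nat,a)] @ (if h = \<one>\<^bsub>G\<^esub> then [] else [(1,u h)])"
      have "altw L" unfolding L_def using altw_Cons altw_Nil a uA1[OF h] phi_u[OF h] by auto
      moreover have "cs_prod A (map snd ((i,x)#W)) = mm e1 (mm (stt (u h)) (cs_prod A (map snd L)))"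
        unfolding L_def using True a aC usC uC[OF h] u_one
        by (simp add: cs_prod_def one_r one_l mul_C)
      ultimately show ?thesis using True Some h y
        by (intro exI[of _ e1] exI[of _ h] exI[of _ L]) (simp add: L_def)
    qed
  next
    case False
    obtain c g L where IH: "g \<in> carrier G" "altw L" "L = [] \<longrightarrow> g = \<one>\<^bsub>G\<^esub>"
      "L \<noteq> [] \<longrightarrow> fst (hd L) = 2"
      "case fst (hd W) of None \<Rightarrow> c \<in> B \<and> \<phi> c = 0 | Some h \<Rightarrow> c = e1 \<and> h = g \<and> L \<noteq> []"
      "cs_prod A (map snd W) = mm c (mm (stt (u g)) (cs_prod A (map snd L)))"
      using Cons.IH[OF False V(4)] by blast
    have PC: "cs_prod A (map snd L) \<in> CC" using prod_C altw_C IH(2) by blast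
    have usC: "stt (u g) \<in> CC" using star_C uC IH(1) by blast
    have cC: "c \<in> CC" using IH(5) B_C one_C by (auto split: option.splits)
    show ?thesis
    proof (cases i)
      case None
      then have xB: "x \<in> B" "\<phi> x = 0" using V unfolding Sfam_def by auto
      then have xC: "x \<in> CC" using B_C by blast
      obtain h where hW: "fst (hd W) = Some h" using V(5) False None by auto
      then have c1: "c = e1" "h = g" "L \<noteq> []" using IH(5) by auto
      have "cs_prod A (map snd ((i,x)#W)) = mm x (mm (stt (u g)) (cs_prod A (map snd L)))"
        using IH(6) c1 one_l usC PC mul_C by (simp add: cs_prod_def)
      then show ?thesis using IH None y xB
        by (intro exI[of _ x] exI[of _ g] exI[of _ L]) simp
    next
      case (Some h)
      then have h: "h \<in> carrier G" using V by auto
      obtain a where a: "a \<in> A2" "\<phi> a = 0" "x = mm (stt (u h)) (mm a (u h))"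
        using elemA2[OF h] V Some by auto
      have aC: "a \<in> CC" using a A2_C by blast
      have uhC: "u h \<in> CC" "stt (u h) \<in> CC" using star_C uC h by auto
      define d where "d = mm (u h) (mm c (stt (u g)))"
      have dC: "d \<in> CC" unfolding d_def using uhC cC usC mul_C by blast
      have hg: "h \<otimes>\<^bsub>G\<^esub> inv\<^bsub>G\<^esub> g \<in> carrier G" using mulG invG h IH(1) by blast
      have dA: "d \<in> A1 \<and> \<phi> d = 0"
      proof (cases "fst (hd W)")
        case None
        then have cB: "c \<in> B" "\<phi> c = 0" using IH(5) by auto
        have "d = mm (mm (u h) c) (stt (u g))" unfolding d_def using assoc uhC cC usC by simp
        also have "\<dots> = mm (\<alpha> h c) (mm (u h) (stt (u g)))"
          using u_b[OF h cB(1)] assoc aB[OF h cB(1)] B_C uhC usC by auto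
        also have "\<dots> = mm (\<alpha> h c) (u (h \<otimes>\<^bsub>G\<^esub> inv\<^bsub>G\<^esub> g))" using u_star IH(1) h by simp
        finally have d: "d = mm (\<alpha> h c) (u (h \<otimes>\<^bsub>G\<^esub> inv\<^bsub>G\<^esub> g))" .
        have "d \<in> A1" unfolding d using A1_mul aB[OF h cB(1)] BA1 uA1[OF hg] by blast
        moreover have "\<phi> d = 0"
        proof (cases "h \<otimes>\<^bsub>G\<^esub> inv\<^bsub>G\<^esub> g = \<one>\<^bsub>G\<^esub>")
          case True
          then show ?thesis unfolding d using u_one one_r aB[OF h cB(1)] B_C phi_a[OF h cB(1)] cB by auto
        next
          case False
          then show ?thesis unfolding d using phi_bu hg aB[OF h cB(1)] by blast
        qed
        ultimately show ?thesis by blast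
      next
        case (Some g')
        then have c1: "c = e1" "g' = g" using IH(5) by auto
        have "g \<noteq> h" using V(5) False Some \<open>i = Some h\<close> c1 by auto
        then have ne: "h \<otimes>\<^bsub>G\<^esub> inv\<^bsub>G\<^esub> g \<noteq> \<one>\<^bsub>G\<^esub>" using grp h IH(1)
          by (metis group.inv_closed group.inv_inv group.r_inv group.inv_equality)
        have d: "d = u (h \<otimes>\<^bsub>G\<^esub> inv\<^bsub>G\<^esub> g)" unfolding d_def c1 using one_l usC u_star IH(1) h by simp
        show ?thesis unfolding d using uA1[OF hg] phi_u[OF hg ne] by blast
      qed
      define L' where "L' = (2::nat,a) # (1,d) # L"
      have "altw L'" unfolding L'_def using altw_Cons a dA IH(2) IH(4) by auto
      moreover have "cs_prod A (map snd ((i,x)#W)) = mm e1 (mm (stt (u h)) (cs_prod A (map snd L')))"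
        unfolding L'_def using IH(6) a(3) aC uhC usC cC PC one_l d_def mul_C
        by (simp add: cs_prod_def assoc mul_C)
      ultimately show ?thesis using Some h y
        by (intro exI[of _ e1] exI[of _ h] exI[of _ L']) (simp add: L'_def)
    qed
  qed
qed

lemma free_result: "free_family A \<phi> (insert None (Some ` carrier G)) Sfam"
  unfolding free_family_def
proof (intro allI impI)
  fix "is" as
  assume H: "length as = length is \<and> 1 \<le> length as \<and> set is \<subseteq> insert None (Some ` carrier G) \<and>
        (\<forall>j<length as. as ! j \<in> Sfam (is ! j) \<and> \<phi> (as ! j) = 0) \<and>
        (\<forall>j. Suc j < length is \<longrightarrow> is ! j \<noteq> is ! Suc j)"
  define W where "W = zip is as"
  have len: "length W = length as" "length W = length is" unfolding W_def using H by auto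
  have sndW: "map snd W = as" unfolding W_def using H by simp
  have fstW: "\<And>j. j < length W \<Longrightarrow> fst (W!j) = is!j" "\<And>j. j < length W \<Longrightarrow> snd (W!j) = as!j"
    unfolding W_def using H by auto
  have WN: "W \<noteq> []" using len H by auto
  have "validW W" unfolding validW_def
  proof
    show "\<forall>p\<in>set W. fst p \<in> insert None (Some ` carrier G) \<and> snd p \<in> Sfam (fst p) \<and> \<phi> (snd p) = 0"
    proof
      fix p assume "p \<in> set W"
      then obtain j where j: "j < length W" "p = W!j" by (metis in_set_conv_nth)
      have "is!j \<in> set is" using j len by simp
      then have ij: "is!j \<in> insert None (Some ` carrier G)" using H by blast
      then show "fst p \<in> insert None (Some ` carrier G) \<and> snd p \<in> Sfam (fst p) \<and> \<phi> (snd p) = 0"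
        using fstW[OF j(1)] H len j ij by simp
    qed
    show "\<forall>j. Suc j < length W \<longrightarrow> fst (W!j) \<noteq> fst (W!Suc j)"
      using fstW H len by auto
  qed
  then obtain c g L where K: "g \<in> carrier G" "altw L" "L = [] \<longrightarrow> g = \<one>\<^bsub>G\<^esub>"
      "L \<noteq> [] \<longrightarrow> fst (hd L) = 2"
      "case fst (hd W) of None \<Rightarrow> c \<in> B \<and> \<phi> c = 0 | Some h \<Rightarrow> c = e1 \<and> h = g \<and> L \<noteq> []"
      "cs_prod A (map snd W) = mm c (mm (stt (u g)) (cs_prod A (map snd L)))"
    using key[OF WN] by blast
  have PC: "cs_prod A (map snd L) \<in> CC" using prod_C altw_C K(2) by blast
  have ig: "inv\<^bsub>G\<^esub> g \<in> carrier G" using invG K(1) .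
  have us: "stt (u g) = u (inv\<^bsub>G\<^esub> g)" using us_eq K(1) .
  have igiff: "inv\<^bsub>G\<^esub> g = \<one>\<^bsub>G\<^esub> \<longleftrightarrow> g = \<one>\<^bsub>G\<^esub>" using grp K(1) by (simp add: group.inv_eq_1_iff)
  show "\<phi> (cs_prod A as) = 0"
  proof (cases "fst (hd W)")
    case None
    then have cB: "c \<in> B" "\<phi> c = 0" using K(5) by auto
    have cC: "c \<in> CC" using cB B_C by blast
    define d where "d = mm c (u (inv\<^bsub>G\<^esub> g))"
    have dA: "d \<in> A1" unfolding d_def using A1_mul cB BA1 uA1[OF ig] by blast
    have dp: "\<phi> d = 0"
    proof (cases "g = \<one>\<^bsub>G\<^esub>")
      case True
      then show ?thesis unfolding d_def using igiff u_one one_r cC cB by simp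
    next
      case False
      then show ?thesis unfolding d_def using phi_bu ig cB igiff by blast
    qed
    have "altw ((1,d)#L)" using altw_Cons dA dp K(2) K(4) by auto
    then have "\<phi> (cs_prod A (map snd ((1,d)#L))) = 0" using alt_zero by blast
    moreover have "cs_prod A (map snd ((1,d)#L)) = cs_prod A as"
      using sndW K(6) us d_def cC uC[OF ig] PC by (simp add: cs_prod_def assoc)
    ultimately show ?thesis by simp
  next
    case (Some h)
    then have c1: "c = e1" "L \<noteq> []" using K(5) by auto
    show ?thesis
    proof (cases "g = \<one>\<^bsub>G\<^esub>")
      case True
      then have "cs_prod A as = cs_prod A (map snd L)"
        using sndW K(6) c1 u_one star_one one_l one_C PC by simp
      then show ?thesis using alt_zero c1 K(2) by simp
    next
      case False
      have "altw ((1, u (inv\<^bsub>G\<^esub> g))#L)" using altw_Cons uA1[OF ig] phi_u[OF ig] igiff False K(2) K(4) by auto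
      then have "\<phi> (cs_prod A (map snd ((1, u (inv\<^bsub>G\<^esub> g))#L))) = 0" using alt_zero by blast
      moreover have "cs_prod A (map snd ((1, u (inv\<^bsub>G\<^esub> g))#L)) = cs_prod A as"
        using sndW K(6) us c1 one_l uC[OF ig] PC mul_C by (simp add: cs_prod_def)
      ultimately show ?thesis by simp
    qed
  qed
qed

end

theorem mainTheorem2:
  fixes G :: "'g monoid" and A :: "'a cstar_alg" and \<phi> :: "'a \<Rightarrow> complex"
    and B A1 A2 :: "'a set" and \<alpha> :: "'g \<Rightarrow> 'a \<Rightarrow> 'a" and u :: "'g \<Rightarrow> 'a"
  assumes "group G" and "infinite (carrier G)"
    \<comment> \<open>free product and the standing conditions on A1, A2\<close>
    and "reduced_free_product A \<phi> A1 A2"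
    and "faithful_on A \<phi> A2"
    \<comment> \<open>B with the action alpha\<close>
    and "unital_cstar_subalgebra A B" and "B \<subseteq> A1"
    and "\<And>g. g \<in> carrier G \<Longrightarrow> star_aut_on A B (\<alpha> g)"
    and "\<And>b. b \<in> B \<Longrightarrow> \<alpha> \<one>\<^bsub>G\<^esub> b = b"
    and "\<And>g h b. g \<in> carrier G \<Longrightarrow> h \<in> carrier G \<Longrightarrow> b \<in> B \<Longrightarrow>
           \<alpha> (g \<otimes>\<^bsub>G\<^esub> h) b = \<alpha> g (\<alpha> h b)"
    \<comment> \<open>A1 = B \<rtimes>_{alpha,r} G with implementing unitaries u g\<close>
    and "\<And>g. g \<in> carrier G \<Longrightarrow> cs_unitary A (u g) \<and> u g \<in> A1"
    and "u \<one>\<^bsub>G\<^esub> = cs_one A"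
    and "\<And>g h. g \<in> carrier G \<Longrightarrow> h \<in> carrier G \<Longrightarrow>
           u (g \<otimes>\<^bsub>G\<^esub> h) = cs_mul A (u g) (u h)"
    and "\<And>g b. g \<in> carrier G \<Longrightarrow> b \<in> B \<Longrightarrow>
           cs_mul A (u g) (cs_mul A b (cs_star A (u g))) = \<alpha> g b"
    and "A1 = cstar_generated A (B \<union> u ` carrier G)"
    \<comment> \<open>phi1 = phi on A1: faithful alpha-invariant state on B, vanishing on B u_g, g \<noteq> e\<close>
    and "faithful_on A \<phi> B"
    and "\<And>g b. g \<in> carrier G \<Longrightarrow> b \<in> B \<Longrightarrow> \<phi> (\<alpha> g b) = \<phi> b"
    and "\<And>g b. g \<in> carrier G \<Longrightarrow> g \<noteq> \<one>\<^bsub>G\<^esub> \<Longrightarrow> b \<in> B \<Longrightarrow> \<phi> (cs_mul A b (u g)) = 0"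
  shows "free_family A \<phi> (insert None (Some ` carrier G))
           (\<lambda>i. case i of None \<Rightarrow> B
                        | Some g \<Rightarrow> {cs_mul A (cs_star A (u g)) (cs_mul A a (u g)) | a. a \<in> A2})"
proof -
  have aB: "\<And>g b. g \<in> carrier G \<Longrightarrow> b \<in> B \<Longrightarrow> \<alpha> g b \<in> B"
    using assms(7) unfolding star_aut_on_def bij_betw_def by blast
  have R: "unital_cstar_algebra A" "is_state A \<phi>" "unital_cstar_subalgebra A A1"
    "unital_cstar_subalgebra A A2" "free_family A \<phi> {1::nat, 2} (\<lambda>i. if i = 1 then A1 else A2)"
    using assms(3) unfolding reduced_free_product_def by blast+
  interpret fp_setting G A \<phi> B A1 A2 \<alpha> u
    by (rule fp_setting.intro[OF assms(1) R(1) R(2) R(3) R(4) assms(5) assms(6) R(5) aB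
        assms(10) assms(11) assms(12) assms(13) assms(16) assms(17)])
  have "Sfam = (\<lambda>i. case i of None \<Rightarrow> B
                        | Some g \<Rightarrow> {cs_mul A (cs_star A (u g)) (cs_mul A a (u g)) | a. a \<in> A2})"
    unfolding Sfam_def by simp
  then show ?thesis using free_result by simp
qed

end
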